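(* Let $p>3$ and $q>6p^4$ be primes, $G=\mathbb{Z}_6^5\times\mathbb{Z}_q$, $H=\mathbb{Z}_p^4$, let $A\subset G$ be the set defined in the context (which is a tile of $G$) and let $B\subset H$ be a spectral set with $|B|=2p$. Then for every map $t:A\to H$, the set $P_t=\bigcup_{a\in A}\{a\}\times(t(a)+B)$ pd-tiles $G\times H$ weakly.
   Context: For a finite abelian group $E$, a set $X\subset E$ pd-tiles $E$ (weakly) if there is a nonnegative function $h:E\to\mathbb{R}$ with $h(0)=1$, $1_X*h=1_E$ (convolution), and $\hat h\ge 0$, where $\hat f(\gamma)=\sum_{x\in E}f(x)\gamma(x)$ for characters $\gamma$. Known fact (may be used): in a finite abelian group, every tile and every spectral set pd-tiles the group; the set $A$ below tiles $G$. A set $X$ is spectral if there is a set $S$ of characters with $|S|=|X|$ and $\hat 1_X(s-s')=0$ for distinct $s,s'\in S$; it is a tile if there is $\Lambda$ with $X+\Lambda=E$ with each element uniquely represented. Construction of $A$: let $v=(1,2,3,4,5)\in\mathbb{Z}_6^5$; for $\pi\in S_5$ let $\pi(v)$ be the vector with permuted coordinates and $A_\pi=\{x\in\mathbb{Z}_6^5:\langle \pi(v),x\rangle\equiv 0\pmod 6\}$. Enumerate $S_5$ as $\pi_0,\dots,\pi_{119}$; for $0\le k\le119$ set $A_k=A_{\pi_k}\times\{k\}$, for $120\le k\le q-1$ set $A_k=A_{\pi_0}\times\{k\}$, and $A=\bigcup_{k=0}^{q-1}A_k$. *)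

theory Defs
  imports "HOL-Analysis.Analysis" "HOL-Combinatorics.Permutations"
begin

text \<open>A finite abelian group Z_{m_0} x ... x Z_{m_{n-1}} represented concretely:
  elements are integer lists x of length n with 0 <= x!i < m!i; the group operation is
  componentwise addition modulo m!i.\<close>

definition grp :: "int list \<Rightarrow> int list set" where
  "grp ms = {x. length x = length ms \<and> (\<forall>i<length ms. 0 \<le> x!i \<and> x!i < ms!i)}"

definition gzero :: "int list \<Rightarrow> int list" where
  "gzero ms = replicate (length ms) 0"

definition gadd :: "int list \<Rightarrow> int list \<Rightarrow> int list \<Rightarrow> int list" where
  "gadd ms x y = map (\<lambda>i. (x!i + y!i) mod ms!i) [0..<length ms]"

definition gsub :: "int list \<Rightarrow> int list \<Rightarrow> int list \<Rightarrow> int list" where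
  "gsub ms x y = map (\<lambda>i. (x!i - y!i) mod ms!i) [0..<length ms]"

text \<open>Every character arises this way, and
  the difference of characters s - s' corresponds to gsub of the indices.\<close>

definition chr :: "int list \<Rightarrow> int list \<Rightarrow> int list \<Rightarrow> complex" where
  "chr ms \<xi> x = cis (2 * pi * (\<Sum>i<length ms. real_of_int (\<xi>!i * x!i) / real_of_int (ms!i)))"

definition fourier :: "int list \<Rightarrow> (int list \<Rightarrow> complex) \<Rightarrow> int list \<Rightarrow> complex" where
  "fourier ms f \<xi> = (\<Sum>x\<in>grp ms. f x * chr ms \<xi> x)"

definition pd_tiles :: "int list \<Rightarrow> int list set \<Rightarrow> bool" where
  "pd_tiles ms X \<longleftrightarrow> (\<exists>h :: int list \<Rightarrow> real.
      (\<forall>x\<in>grp ms. 0 \<le> h x) \<and> h (gzero ms) = 1 \<and>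
      (\<forall>x\<in>grp ms. (\<Sum>y\<in>grp ms. (if y \<in> X then 1 else 0) * h (gsub ms x y)) = 1) \<and>
      (\<forall>\<xi>\<in>grp ms. Im (fourier ms (\<lambda>x. complex_of_real (h x)) \<xi>) = 0
                   \<and> 0 \<le> Re (fourier ms (\<lambda>x. complex_of_real (h x)) \<xi>)))"

definition spectral :: "int list \<Rightarrow> int list set \<Rightarrow> bool" where
  "spectral ms X \<longleftrightarrow> (\<exists>S \<subseteq> grp ms. card S = card X \<and>
      (\<forall>s\<in>S. \<forall>s'\<in>S. s \<noteq> s' \<longrightarrow>
          fourier ms (\<lambda>x. if x \<in> X then 1 else 0) (gsub ms s s') = 0))"

text \<open>A_pi for v = (1,...,5), coordinates indexed 0..4: pi(v)_i = v_{pi i} = pi i + 1.\<close>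

definition A_perm :: "(nat \<Rightarrow> nat) \<Rightarrow> int list set" where
  "A_perm \<pi> = {x \<in> grp (replicate 5 6). (\<Sum>i<5. int (\<pi> i + 1) * x!i) mod 6 = 0}"

text \<open>The set A in Z_6^5 x Z_q (elements x @ [k]) for an enumeration e of S_5.\<close>

definition A_set :: "(nat \<Rightarrow> nat \<Rightarrow> nat) \<Rightarrow> nat \<Rightarrow> int list set" where
  "A_set e q = {x @ [int k] | x k. k < q \<and> x \<in> A_perm (e (if k < 120 then k else 0))}"

definition P_set :: "int list \<Rightarrow> int list set \<Rightarrow> (int list \<Rightarrow> int list) \<Rightarrow> int list set \<Rightarrow> int list set" where
  "P_set Hms A t B = {a @ gadd Hms (t a) b | a b. a \<in> A \<and> b \<in> B}"

end

theory Submission imports Defs begin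

definition pos :: "int list \<Rightarrow> bool" where "pos ms \<longleftrightarrow> (\<forall>i<length ms. 0 < ms!i)"

lemma grp_Nil: "grp [] = {[]}" by (auto simp: grp_def)

lemma grp_Cons: "grp (m#ms) = (\<lambda>(a,x). a#x) ` ({0..<m} \<times> grp ms)"
proof (rule set_eqI)
  fix x show "x \<in> grp (m#ms) \<longleftrightarrow> x \<in> (\<lambda>(a,x). a#x) ` ({0..<m} \<times> grp ms)"
  proof
    assume x: "x \<in> grp (m#ms)"
    then obtain a y where xa: "x = a#y" by (cases x) (auto simp: grp_def)
    have "a \<in> {0..<m}" using x xa by (auto simp: grp_def)
    moreover have "y \<in> grp ms" using x xa by (fastforce simp: grp_def)
    ultimately show "x \<in> (\<lambda>(a,x). a#x) ` ({0..<m} \<times> grp ms)" using xa by auto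
  next
    assume "x \<in> (\<lambda>(a,x). a#x) ` ({0..<m} \<times> grp ms)"
    then show "x \<in> grp (m#ms)" by (auto simp: grp_def nth_Cons split: nat.splits)
  qed
qed

lemma finite_grp: "finite (grp ms)"
  by (induction ms) (auto simp: grp_Nil grp_Cons)

lemma grp_length: "x \<in> grp ms \<Longrightarrow> length x = length ms" by (simp add: grp_def)

lemma grp_append_mem:
  "x \<in> grp (m1 @ m2) \<longleftrightarrow> length x = length m1 + length m2 \<and> take (length m1) x \<in> grp m1 \<and> drop (length m1) x \<in> grp m2"
proof
  assume x: "x \<in> grp (m1@m2)"
  then have l: "length x = length m1 + length m2" and b: "\<And>i. i < length m1 + length m2 \<Longrightarrow> 0 \<le> x!i \<and> x!i < (m1@m2)!i"
    by (auto simp: grp_def)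
  have "take (length m1) x \<in> grp m1"
  proof -
    { fix i assume i: "i < length m1"
      have "0 \<le> x!i \<and> x!i < (m1@m2)!i" using b i by simp
      then have "0 \<le> take (length m1) x ! i \<and> take (length m1) x ! i < m1 ! i" using l i by (simp add: nth_append) }
    then show ?thesis using l by (simp add: grp_def)
  qed
  moreover have "drop (length m1) x \<in> grp m2"
  proof -
    { fix i assume i: "i < length m2"
      have "0 \<le> x!(length m1 + i) \<and> x!(length m1 + i) < (m1@m2)!(length m1 + i)" using b[of "length m1 + i"] i by simp
      then have "0 \<le> drop (length m1) x ! i \<and> drop (length m1) x ! i < m2 ! i" using l i by (simp add: nth_append) }
    then show ?thesis using l by (simp add: grp_def)
  qed
  ultimately show "length x = length m1 + length m2 \<and> take (length m1) x \<in> grp m1 \<and> drop (length m1) x \<in> grp m2" using l by simp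
next
  assume a: "length x = length m1 + length m2 \<and> take (length m1) x \<in> grp m1 \<and> drop (length m1) x \<in> grp m2"
  show "x \<in> grp (m1@m2)" unfolding grp_def
  proof (rule CollectI, rule conjI)
    show "length x = length (m1@m2)" using a by simp
    show "\<forall>i<length (m1@m2). 0 \<le> x!i \<and> x!i < (m1@m2)!i"
    proof (intro allI impI)
    fix i assume i: "i < length (m1@m2)"
    show "0 \<le> x!i \<and> x!i < (m1@m2)!i"
    proof (cases "i < length m1")
      case True
      then show ?thesis using a by (auto simp: grp_def nth_append)
    next
      case False
      define j where "j = i - length m1"
      have ij: "i = length m1 + j" using False j_def by simp
      have "j < length m2" using i ij by simp
      then have "0 \<le> drop (length m1) x ! j \<and> drop (length m1) x ! j < m2!j" using a by (auto simp: grp_def)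
      then show ?thesis using a ij by (simp add: nth_append)
    qed
    qed
  qed
qed

lemma grp_append: "grp (m1 @ m2) = (\<lambda>(g,y). g @ y) ` (grp m1 \<times> grp m2)"
proof (rule set_eqI)
  fix x show "x \<in> grp (m1@m2) \<longleftrightarrow> x \<in> (\<lambda>(g,y). g @ y) ` (grp m1 \<times> grp m2)"
  proof
    assume "x \<in> grp (m1@m2)"
    then have a: "take (length m1) x \<in> grp m1" "drop (length m1) x \<in> grp m2" by (auto simp: grp_append_mem)
    have "x = (\<lambda>(g,y). g @ y) (take (length m1) x, drop (length m1) x)" by simp
    then show "x \<in> (\<lambda>(g,y). g @ y) ` (grp m1 \<times> grp m2)" using a by blast
  next
    assume "x \<in> (\<lambda>(g,y). g @ y) ` (grp m1 \<times> grp m2)"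
    then show "x \<in> grp (m1@m2)" by (auto simp: grp_def nth_append)
  qed
qed

lemma sum_grp_append:
  "(\<Sum>x\<in>grp (m1@m2). f x) = (\<Sum>g\<in>grp m1. \<Sum>y\<in>grp m2. f (g @ y))"
proof -
  have inj: "inj_on (\<lambda>(g,y). g @ y) (grp m1 \<times> grp m2)"
    by (auto simp: inj_on_def grp_def)
  show ?thesis
    unfolding grp_append sum.reindex[OF inj]
    by (simp add: sum.cartesian_product finite_grp case_prod_unfold)
qed

lemma length_gsub[simp]: "length (gsub ms x y) = length ms" by (simp add: gsub_def)
lemma length_gadd[simp]: "length (gadd ms x y) = length ms" by (simp add: gadd_def)
lemma nth_gsub[simp]: "i < length ms \<Longrightarrow> gsub ms x y ! i = (x!i - y!i) mod ms!i" by (simp add: gsub_def)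
lemma nth_gadd[simp]: "i < length ms \<Longrightarrow> gadd ms x y ! i = (x!i + y!i) mod ms!i" by (simp add: gadd_def)

lemma gsub_grp: "pos ms \<Longrightarrow> gsub ms x y \<in> grp ms" by (simp add: grp_def pos_def)
lemma gadd_grp: "pos ms \<Longrightarrow> gadd ms x y \<in> grp ms" by (simp add: grp_def pos_def)

lemma gsub_append:
  assumes "length g = length m1" "length g' = length m1"
  shows "gsub (m1@m2) (g@y) (g'@y') = gsub m1 g g' @ gsub m2 y y'"
  by (rule nth_equalityI) (auto simp: nth_append assms)

lemma gzero_append: "gzero (m1@m2) = gzero m1 @ gzero m2" by (simp add: gzero_def replicate_add)

lemma chr_append:
  assumes "length \<xi> = length m1" "length g = length m1"
  shows "chr (m1@m2) (\<xi>@\<xi>') (g@y) = chr m1 \<xi> g * chr m2 \<xi>' y"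
proof -
  let ?n = "length m1" and ?k = "length m2"
  let ?f = "\<lambda>i. real_of_int ((\<xi>@\<xi>')!i * (g@y)!i) / real_of_int ((m1@m2)!i)"
  have "(\<Sum>i<length (m1@m2). ?f i) = (\<Sum>i<?n. ?f i) + (\<Sum>i=?n..<?k+?n. ?f i)"
    by (simp add: add.commute lessThan_atLeast0 sum.atLeastLessThan_concat)
  also have "(\<Sum>i=?n..<?k+?n. ?f i) = (\<Sum>i=0..<?k. ?f (i+?n))"
    using sum.shift_bounds_nat_ivl[of ?f 0 ?n ?k] by simp
  also have "\<dots> = (\<Sum>i<?k. real_of_int (\<xi>'!i * y!i) / real_of_int (m2!i))"
    using assms by (simp add: nth_append lessThan_atLeast0)
  also have "(\<Sum>i<?n. ?f i) = (\<Sum>i<?n. real_of_int (\<xi>!i * g!i) / real_of_int (m1!i))"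
    using assms by (simp add: nth_append)
  finally show ?thesis unfolding chr_def by (simp add: cis_mult distrib_left)
qed

lemma cis_int: "cis (2*pi*(a + of_int k)) = cis (2*pi*a)"
proof -
  have "cis (2*pi*(a + of_int k)) = cis (2*pi*a + 2*pi * of_int k)" by (simp add: distrib_left)
  also have "\<dots> = cis (2*pi*a) * cis (2*pi * of_int k)" by (rule cis_mult[symmetric])
  also have "cis (2*pi * of_int k) = 1" by (rule cis_multiple_2pi) simp
  finally show ?thesis by (simp only: mult_1_right)
qed

lemma mod_real:
  assumes "(m::int) > 0"
  shows "real_of_int (z mod m) = real_of_int z - real_of_int m * real_of_int (z div m)"
proof -
  have "z mod m = z - m*(z div m)" by (simp add: minus_div_mult_eq_mod[symmetric] mult.commute)
  then show ?thesis by (metis of_int_diff of_int_mult)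
qed

lemma chr_gsub:
  assumes "pos ms"
  shows "chr ms \<xi> (gsub ms x y) = chr ms \<xi> x * cnj (chr ms \<xi> y)"
proof -
  let ?S = "\<lambda>x. (\<Sum>i<length ms. real_of_int (\<xi>!i * x!i) / real_of_int (ms!i))"
  have "?S (gsub ms x y) = (\<Sum>i<length ms. real_of_int (\<xi>!i * x!i) / real_of_int (ms!i)
     - real_of_int (\<xi>!i * y!i) / real_of_int (ms!i) - of_int (\<xi>!i*((x!i - y!i) div ms!i)))"
  proof (intro sum.cong refl)
    fix i assume i: "i \<in> {..<length ms}"
    then have m: "ms!i > 0" using assms unfolding pos_def by auto
    show "real_of_int (\<xi>!i * gsub ms x y!i) / real_of_int (ms!i) = real_of_int (\<xi>!i * x!i) / real_of_int (ms!i)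
     - real_of_int (\<xi>!i * y!i) / real_of_int (ms!i) - of_int (\<xi>!i*((x!i - y!i) div ms!i))"
    proof -
      have F: "real_of_int ((x!i - y!i) mod ms!i) + real_of_int (ms!i) * real_of_int ((x!i - y!i) div ms!i) = real_of_int (x!i) - real_of_int (y!i)"
        using mod_real[OF m, of "x!i - y!i"] by simp
      have G: "real_of_int (\<xi>!i) * (real_of_int ((x!i - y!i) mod ms!i) + real_of_int (ms!i) * real_of_int ((x!i - y!i) div ms!i)) = real_of_int (\<xi>!i) * (real_of_int (x!i) - real_of_int (y!i))"
        using F by simp
      show ?thesis using i m G by (simp add: field_simps)
    qed
  qed
  also have "\<dots> = ?S x - ?S y + of_int (- (\<Sum>i<length ms. \<xi>!i*((x!i - y!i) div ms!i)))"
    by (simp add: sum_subtractf)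
  finally have e: "?S (gsub ms x y) = ?S x - ?S y + of_int (- (\<Sum>i<length ms. \<xi>!i*((x!i - y!i) div ms!i)))" .
  show ?thesis unfolding chr_def e cis_int
    by (simp add: cis_cnj cis_mult algebra_simps)
qed

lemma chr_gadd:
  assumes "pos ms"
  shows "chr ms \<xi> (gadd ms x y) = chr ms \<xi> x * chr ms \<xi> y"
proof -
  let ?S = "\<lambda>x. (\<Sum>i<length ms. real_of_int (\<xi>!i * x!i) / real_of_int (ms!i))"
  have "?S (gadd ms x y) = (\<Sum>i<length ms. real_of_int (\<xi>!i * x!i) / real_of_int (ms!i)
     + real_of_int (\<xi>!i * y!i) / real_of_int (ms!i) - of_int (\<xi>!i*((x!i + y!i) div ms!i)))"
  proof (intro sum.cong refl)
    fix i assume i: "i \<in> {..<length ms}"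
    then have m: "ms!i > 0" using assms unfolding pos_def by auto
    show "real_of_int (\<xi>!i * gadd ms x y!i) / real_of_int (ms!i) = real_of_int (\<xi>!i * x!i) / real_of_int (ms!i)
     + real_of_int (\<xi>!i * y!i) / real_of_int (ms!i) - of_int (\<xi>!i*((x!i + y!i) div ms!i))"
    proof -
      have F: "real_of_int ((x!i + y!i) mod ms!i) + real_of_int (ms!i) * real_of_int ((x!i + y!i) div ms!i) = real_of_int (x!i) + real_of_int (y!i)"
        using mod_real[OF m, of "x!i + y!i"] by simp
      have G: "real_of_int (\<xi>!i) * (real_of_int ((x!i + y!i) mod ms!i) + real_of_int (ms!i) * real_of_int ((x!i + y!i) div ms!i)) = real_of_int (\<xi>!i) * (real_of_int (x!i) + real_of_int (y!i))"
        using F by simp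
      show ?thesis using i m G by (simp add: field_simps)
    qed
  qed
  also have "\<dots> = ?S x + ?S y + of_int (- (\<Sum>i<length ms. \<xi>!i*((x!i + y!i) div ms!i)))"
    by (simp add: sum_subtractf sum.distrib)
  finally have e: "?S (gadd ms x y) = ?S x + ?S y + of_int (- (\<Sum>i<length ms. \<xi>!i*((x!i + y!i) div ms!i)))" .
  show ?thesis unfolding chr_def e cis_int
    by (simp add: cis_mult algebra_simps)
qed

lemma chr_sym: "chr ms \<xi> x = chr ms x \<xi>" by (simp add: chr_def mult.commute)

lemma chr_gsub_left: "pos ms \<Longrightarrow> chr ms (gsub ms s s') x = chr ms s x * cnj (chr ms s' x)"
  using chr_gsub[of ms x s s'] unfolding chr_sym[of ms x s] chr_sym[of ms x s'] chr_sym[of ms x "gsub ms s s'"] .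
lemma chr_gadd_left: "pos ms \<Longrightarrow> chr ms (gadd ms s s') x = chr ms s x * chr ms s' x"
  using chr_gadd[of ms x s s'] unfolding chr_sym[of ms x s] chr_sym[of ms x s'] chr_sym[of ms x "gadd ms s s'"] .
lemma norm_chr[simp]: "cmod (chr ms \<xi> x) = 1" by (simp add: chr_def norm_cis)


definition nnr :: "complex \<Rightarrow> bool" where "nnr z \<longleftrightarrow> Im z = 0 \<and> 0 \<le> Re z"

lemma nnr_mult: "nnr a \<Longrightarrow> nnr b \<Longrightarrow> nnr (a*b)" by (simp add: nnr_def)
lemma nnr_sum: "(\<And>x. x \<in> A \<Longrightarrow> nnr (f x)) \<Longrightarrow> nnr (sum f A)"
  by (simp add: nnr_def Re_sum Im_sum sum_nonneg)
lemma nnr_of_real: "0 \<le> r \<Longrightarrow> nnr (complex_of_real r)" by (simp add: nnr_def)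
lemma nnr_cnj: "nnr (z * cnj z)" by (simp add: nnr_def complex_mult_cnj)

lemma grp_single: "grp [m] = (\<lambda>a. [a]) ` {0..<m}"
proof (rule set_eqI)
  fix x show "x \<in> grp [m] \<longleftrightarrow> x \<in> (\<lambda>a. [a]) ` {0..<m}"
  proof
    assume "x \<in> grp [m]"
    then have "length x = 1" "0 \<le> x!0" "x!0 < m" by (auto simp: grp_def)
    then have "x = [x!0]" "x!0 \<in> {0..<m}" by (auto simp: length_Suc_conv)
    then show "x \<in> (\<lambda>a. [a]) ` {0..<m}" by blast
  qed (auto simp: grp_def)
qed

lemma geo_nnr:
  assumes "(m::int) > 0"
  shows "nnr (\<Sum>a\<in>{0..<m}. cis (2*pi*(real_of_int (e*a) / real_of_int m)))"
proof -
  define n where "n = nat m"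
  define z where "z = cis (2*pi*real_of_int e / real_of_int m)"
  have mn: "m = int n" using assms n_def by simp
  have inj: "inj_on int {..<n}" by simp
  have im: "int ` {..<n} = {0..<m}" using mn by (simp add: lessThan_atLeast0 image_int_atLeastLessThan)
  have "(\<Sum>a\<in>{0..<m}. cis (2*pi*(real_of_int (e*a) / real_of_int m))) = (\<Sum>k<n. cis (2*pi*(real_of_int (e*int k) / real_of_int m)))"
    unfolding im[symmetric] sum.reindex[OF inj] by simp
  also have "\<dots> = (\<Sum>k<n. z^k)"
  proof (intro sum.cong refl)
    fix k
    show "cis (2*pi*(real_of_int (e*int k) / real_of_int m)) = z^k"
    proof -
      have H: "real k * (2*pi*real_of_int e / real_of_int m) = 2*pi*(real_of_int (e*int k)/real_of_int m)" by simp
      show ?thesis by (simp only: z_def Complex.DeMoivre H)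
    qed
  qed
  also have "\<dots> = (if z = 1 then of_nat n else (1 - z^n) / (1 - z))" by (rule sum_gp_strict)
  also have "z^n = 1"
  proof -
    have "z^n = cis (real n * (2*pi*real_of_int e / real_of_int m))" unfolding z_def Complex.DeMoivre ..
    also have "real n * (2*pi*real_of_int e / real_of_int m) = 2*pi*real_of_int e" using mn assms by simp
    also have "cis (2*pi*real_of_int e) = 1" by (rule cis_multiple_2pi) simp
    finally show ?thesis .
  qed
  finally show ?thesis by (simp add: nnr_def)
qed

lemma ortho_nnr:
  "pos ms \<Longrightarrow> length \<eta> = length ms \<Longrightarrow> nnr (\<Sum>y\<in>grp ms. chr ms \<eta> y)"
proof (induction ms arbitrary: \<eta>)
  case Nil
  then show ?case by (simp add: grp_Nil chr_def nnr_def)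
next
  case (Cons m ms)
  then obtain e \<eta>' where eta: "\<eta> = [e] @ \<eta>'" "length \<eta>' = length ms" by (cases \<eta>) auto
  have m: "m > 0" using Cons.prems by (auto simp: pos_def)
  have pms: "pos ms" using Cons.prems by (auto simp: pos_def)
  have "(\<Sum>y\<in>grp (m#ms). chr (m#ms) \<eta> y) = (\<Sum>g\<in>grp [m]. \<Sum>y\<in>grp ms. chr ([m]@ms) ([e]@\<eta>') (g@y))"
    using sum_grp_append[of _ "[m]" ms] eta by simp
  also have "\<dots> = (\<Sum>g\<in>grp [m]. \<Sum>y\<in>grp ms. chr [m] [e] g * chr ms \<eta>' y)"
    using chr_append[of "[e]" "[m]"] grp_length[of _ "[m]"] by (intro sum.cong refl) simp
  also have "\<dots> = (\<Sum>g\<in>grp [m]. chr [m] [e] g) * (\<Sum>y\<in>grp ms. chr ms \<eta>' y)"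
    by (simp add: sum_product)
  also have "(\<Sum>g\<in>grp [m]. chr [m] [e] g) = (\<Sum>a\<in>{0..<m}. cis (2*pi*(real_of_int (e*a) / real_of_int m)))"
    unfolding grp_single by (subst sum.reindex) (auto simp: inj_on_def chr_def)
  finally show ?case using geo_nnr[OF m, of e] Cons.IH[OF pms eta(2)] by (simp add: nnr_mult)
qed

lemma fourier_ind:
  assumes "B \<subseteq> grp ms"
  shows "fourier ms (\<lambda>x. if x \<in> B then 1 else 0) \<xi> = (\<Sum>b\<in>B. chr ms \<xi> b)"
proof -
  have "fourier ms (\<lambda>x. if x \<in> B then 1 else 0) \<xi> = (\<Sum>x\<in>grp ms. if x \<in> B then chr ms \<xi> x else 0)"
    unfolding fourier_def by (intro sum.cong refl) simp
  also have "\<dots> = (\<Sum>x\<in>grp ms \<inter> B. chr ms \<xi> x)" by (simp add: sum.inter_restrict finite_grp)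
  also have "grp ms \<inter> B = B" using assms by blast
  finally show ?thesis .
qed

lemma spec_sum:
  assumes pm: "pos ms" and B: "B \<subseteq> grp ms" and S: "finite S"
    and orth: "\<forall>s\<in>S. \<forall>s'\<in>S. s \<noteq> s' \<longrightarrow> fourier ms (\<lambda>x. if x \<in> B then 1 else 0) (gsub ms s s') = 0"
    and al: "\<And>s. cmod (\<alpha> s) = 1"
  shows "(\<Sum>b\<in>B. (cmod (\<Sum>s\<in>S. \<alpha> s * cnj (chr ms s b)))^2) = real (card S * card B)"
proof -
  have fB: "finite B" using B finite_grp finite_subset by blast
  have inner: "(\<Sum>b\<in>B. cnj (chr ms s b) * chr ms s' b) = (if s = s' then of_nat (card B) else 0)"
    if "s \<in> S" "s' \<in> S" for s s'
  proof (cases "s = s'")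
    case True
    have "cnj (chr ms s b) * chr ms s b = 1" for b
      by (metis complex_mult_cnj complex_norm_square mult.commute norm_chr of_real_1 power_one)
    then show ?thesis using True by simp
  next
    case False
    have "(\<Sum>b\<in>B. cnj (chr ms s b) * chr ms s' b) = (\<Sum>b\<in>B. chr ms (gsub ms s' s) b)"
      by (intro sum.cong refl) (simp add: chr_gsub_left[OF pm] mult.commute)
    also have "\<dots> = 0" using orth that False fourier_ind[OF B] by metis
    finally show ?thesis using False by simp
  qed
  have "complex_of_real (\<Sum>b\<in>B. (cmod (\<Sum>s\<in>S. \<alpha> s * cnj (chr ms s b)))^2)
     = (\<Sum>b\<in>B. (\<Sum>s\<in>S. \<alpha> s * cnj (chr ms s b)) * cnj (\<Sum>s\<in>S. \<alpha> s * cnj (chr ms s b)))"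
    by (simp only: of_real_sum complex_norm_square)
  also have "\<dots> = (\<Sum>b\<in>B. \<Sum>s\<in>S. \<Sum>s'\<in>S. \<alpha> s * cnj (\<alpha> s') * (cnj (chr ms s b) * chr ms s' b))"
    by (simp add: cnj_sum sum_product algebra_simps)
  also have "\<dots> = (\<Sum>s\<in>S. \<Sum>s'\<in>S. \<alpha> s * cnj (\<alpha> s') * (\<Sum>b\<in>B. cnj (chr ms s b) * chr ms s' b))"
    by (simp add: sum_distrib_left sum.swap[of _ B])
  also have "\<dots> = (\<Sum>s\<in>S. \<Sum>s'\<in>S. if s = s' then \<alpha> s * cnj (\<alpha> s) * of_nat (card B) else 0)"
    by (intro sum.cong refl) (simp add: inner)
  also have "\<dots> = (\<Sum>s\<in>S. \<alpha> s * cnj (\<alpha> s) * of_nat (card B))"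
    using S by (simp add: sum.delta)
  also have "\<dots> = (\<Sum>s\<in>S. of_nat (card B))"
    by (intro sum.cong refl) (metis al complex_mult_cnj complex_norm_square mult_1 of_real_1 power_one)
  also have "\<dots> = complex_of_real (real (card S * card B))" by simp
  finally show ?thesis using of_real_eq_iff by blast
qed


lemma gsub_eq_iff:
  assumes pm: "pos ms" and g: "g \<in> grp ms" and a: "a \<in> grp ms" and d: "d \<in> grp ms"
  shows "gsub ms g a = d \<longleftrightarrow> a = gsub ms g d"
proof -
  have c: "(g!i - a!i) mod ms!i = d!i \<longleftrightarrow> a!i = (g!i - d!i) mod ms!i" if i: "i < length ms" for i
  proof -
    have m: "ms!i > 0" using pm i by (simp add: pos_def)
    have r: "0 \<le> g!i" "g!i < ms!i" "0 \<le> a!i" "a!i < ms!i" "0 \<le> d!i" "d!i < ms!i"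
      using g a d i by (auto simp: grp_def)
    have "(g!i - a!i) mod ms!i = d!i \<longleftrightarrow> (g!i - a!i) mod ms!i = d!i mod ms!i" using r by simp
    also have "\<dots> \<longleftrightarrow> ms!i dvd (g!i - a!i - d!i)" by (simp add: mod_eq_dvd_iff)
    also have "\<dots> \<longleftrightarrow> ms!i dvd (g!i - d!i - a!i)" by (simp add: algebra_simps)
    also have "\<dots> \<longleftrightarrow> (g!i - d!i) mod ms!i = a!i mod ms!i" by (simp add: mod_eq_dvd_iff)
    also have "\<dots> \<longleftrightarrow> a!i = (g!i - d!i) mod ms!i" using r by auto
    finally show ?thesis .
  qed
  have la: "length a = length ms" "length d = length ms" using a d by (auto simp: grp_def)
  show ?thesis
  proof
    assume "gsub ms g a = d"
    then have "\<forall>i<length ms. (g!i - a!i) mod ms!i = d!i" by auto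
    then show "a = gsub ms g d" using c la by (intro nth_equalityI) auto
  next
    assume "a = gsub ms g d"
    then have "\<forall>i<length ms. a!i = (g!i - d!i) mod ms!i" by auto
    then show "gsub ms g a = d" using c la by (intro nth_equalityI) auto
  qed
qed

lemma gsub_zero_right: "pos ms \<Longrightarrow> a \<in> grp ms \<Longrightarrow> gsub ms a (gzero ms) = a"
  by (intro nth_equalityI) (auto simp: gzero_def grp_def)

lemma gzero_grp: "pos ms \<Longrightarrow> gzero ms \<in> grp ms"
  by (auto simp: gzero_def grp_def pos_def)

lemma gsub_eq_zero: "pos ms \<Longrightarrow> a \<in> grp ms \<Longrightarrow> b \<in> grp ms \<Longrightarrow> gsub ms a b = gzero ms \<longleftrightarrow> a = b"
  using gsub_eq_iff[of ms a b "gzero ms"] gzero_grp gsub_zero_right by metis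

definition mG :: "nat \<Rightarrow> int list" where "mG q = replicate 5 6 @ [int q]"

lemma mG_len[simp]: "length (mG q) = 6" by (simp add: mG_def)
lemma mG_nth: "i < 5 \<Longrightarrow> mG q ! i = 6" "mG q ! 5 = int q" by (auto simp: mG_def nth_append)
lemma mG_pos: "q > 0 \<Longrightarrow> pos (mG q)"
  by (auto simp: pos_def mG_def nth_append)

definition cC :: "nat \<Rightarrow> int list" where
  "cC j = (if j < 5 then (replicate 6 0)[j := 1] else replicate 6 0)"

lemma cC_len[simp]: "length (cC j) = 6" by (simp add: cC_def)
lemma cC_nth: "i < 6 \<Longrightarrow> cC j ! i = (if j < 5 \<and> i = j then 1 else 0)"
  by (auto simp: cC_def nth_list_update)
lemma cC_grp: "q > 0 \<Longrightarrow> cC j \<in> grp (mG q)"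
proof -
  assume q: "q > 0"
  { fix i :: nat assume i: "i < 6"
    have "0 \<le> cC j ! i \<and> cC j ! i < mG q ! i"
      using i q by (cases "i < 5") (auto simp: cC_nth mG_nth(1) nth_append mG_def) }
  then show ?thesis by (simp add: grp_def)
qed

definition phi :: "(nat \<Rightarrow> nat) \<Rightarrow> int list \<Rightarrow> int" where
  "phi \<pi> x = (\<Sum>i<5. int (\<pi> i + 1) * x!i)"

definition val :: "(nat \<Rightarrow> nat) \<Rightarrow> nat \<Rightarrow> int" where
  "val \<pi> j = (if j < 5 then int (\<pi> j + 1) else 0)"

lemma phi_cC: "j < 6 \<Longrightarrow> phi \<pi> (cC j) = val \<pi> j"
proof -
  assume j: "j < 6"
  have "phi \<pi> (cC j) = (\<Sum>i<5. if i = j then int (\<pi> i + 1) else 0)"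
    unfolding phi_def by (intro sum.cong refl) (auto simp: cC_nth)
  also have "\<dots> = val \<pi> j" by (simp add: val_def)
  finally show ?thesis .
qed

lemma val_image:
  assumes "\<pi> permutes {..<5}"
  shows "val \<pi> ` {..<6} = {0..<6}" "inj_on (val \<pi>) {..<6}"
proof -
  have im: "\<pi> ` {..<5} = {..<5}" using assms by (rule permutes_image)
  have "val \<pi> ` {..<5} = (\<lambda>k. int k + 1) ` (\<pi> ` {..<5})"
    by (auto simp: val_def image_iff)
  also have "\<dots> = {1..<6}" unfolding im
  proof (rule set_eqI)
    fix v :: int
    show "v \<in> (\<lambda>k. int k + 1) ` {..<5} \<longleftrightarrow> v \<in> {1..<6}"
    proof
      assume "v \<in> {1..<6}"
      then have "nat (v - 1) < 5" "v = int (nat (v-1)) + 1" by auto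
      then show "v \<in> (\<lambda>k. int k + 1) ` {..<5}" by blast
    qed auto
  qed
  finally have a: "val \<pi> ` {..<5} = {1..<6}" .
  have e: "{..<6::nat} = insert 5 {..<5}" by auto
  have "val \<pi> ` {..<6} = insert (val \<pi> 5) (val \<pi> ` {..<5})" by (simp only: e image_insert)
  also have "val \<pi> 5 = 0" by (simp add: val_def)
  finally have "val \<pi> ` {..<6} = insert 0 {1..<6}" using a by simp
  also have "\<dots> = {0..<6}" by auto
  finally show b: "val \<pi> ` {..<6} = {0..<6}" .
  show "inj_on (val \<pi>) {..<6}"
    by (rule eq_card_imp_inj_on) (simp_all add: b)
qed

lemma count_one:
  assumes "\<pi> permutes {..<5}"
  shows "(\<Sum>j<6. if (R - val \<pi> j) mod 6 = 0 then 1 else (0::real)) = 1"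
proof -
  have "(\<Sum>j<6. if (R - val \<pi> j) mod 6 = 0 then 1 else (0::real)) = (\<Sum>j<6. if val \<pi> j = R mod 6 then 1 else 0)"
  proof (intro sum.cong refl)
    fix j assume "j \<in> {..<(6::nat)}"
    then have "val \<pi> j \<in> {0..<6}" using val_image[OF assms] by blast
    then have "(R - val \<pi> j) mod 6 = 0 \<longleftrightarrow> val \<pi> j = R mod 6"
      by (auto simp: mod_eq_dvd_iff[symmetric] dvd_eq_mod_eq_0[symmetric])
    then show "(if (R - val \<pi> j) mod 6 = 0 then 1 else (0::real)) = (if val \<pi> j = R mod 6 then 1 else 0)" by simp
  qed
  also have "\<dots> = (\<Sum>v\<in>val \<pi> ` {..<6}. if v = R mod 6 then 1 else 0)"
    by (simp add: sum.reindex[OF val_image(2)[OF assms]])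
  also have "\<dots> = 1" unfolding val_image(1)[OF assms] by (simp add: sum.delta)
  finally show ?thesis .
qed


lemma grp_rep_single: "x \<in> grp xs \<Longrightarrow> 0 \<le> k \<Longrightarrow> k < m \<Longrightarrow> x @ [k] \<in> grp (xs @ [m])"
  by (auto simp: grp_def nth_append)

lemma A_grp: "A_set e q \<subseteq> grp (mG q)"
proof
  fix w assume "w \<in> A_set e q"
  then obtain x k where w: "w = x @ [int k]" "k < q" "x \<in> A_perm (e (if k < 120 then k else 0))"
    unfolding A_set_def by blast
  then have "x \<in> grp (replicate 5 6)" by (simp add: A_perm_def)
  then show "w \<in> grp (mG q)" unfolding mG_def w(1) by (rule grp_rep_single) (use w in auto)
qed

definition idx :: "int list \<Rightarrow> nat" where "idx w = (if nat (w!5) < 120 then nat (w!5) else 0)"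

lemma A_mem:
  assumes w: "w \<in> grp (mG q)"
  shows "w \<in> A_set e q \<longleftrightarrow> phi (e (idx w)) w mod 6 = 0"
proof -
  have lw: "length w = 6" using w by (simp add: grp_def)
  have "0 \<le> w!5 \<and> w!5 < mG q ! 5" using w by (simp add: grp_def)
  then have w5: "0 \<le> w!5" "w!5 < int q" by (auto simp: mG_nth)
  have ws: "w = take 5 w @ [w!5]"
  proof (rule nth_equalityI)
    show "length w = length (take 5 w @ [w!5])" using lw by simp
    fix i assume "i < length w"
    then consider "i < 5" | "i = 5" using lw by linarith
    then show "w!i = (take 5 w @ [w!5])!i" by cases (simp_all add: nth_append lw)
  qed
  have tg: "take 5 w \<in> grp (replicate 5 6)" using w unfolding mG_def grp_append_mem by simp
  have ph: "phi \<pi> (take 5 w) = phi \<pi> w" for \<pi> unfolding phi_def by (intro sum.cong refl) simp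
  show ?thesis
  proof
    assume "w \<in> A_set e q"
    then obtain x k where a: "w = x @ [int k]" "k < q" "x \<in> A_perm (e (if k < 120 then k else 0))"
      unfolding A_set_def by blast
    have lx: "length x = 5" using a(3) by (simp add: A_perm_def grp_def)
    have "x = take 5 w" using a(1) lx by simp
    moreover have "int k = w!5" using a(1) lx by (simp add: nth_append)
    then have "k = nat (w!5)" by simp
    then have "x \<in> A_perm (e (idx w))" using a(3) unfolding idx_def by (simp only: \<open>k = nat (w!5)\<close>[symmetric])
    then have "phi (e (idx w)) x mod 6 = 0" unfolding A_perm_def phi_def by simp
    then show "phi (e (idx w)) w mod 6 = 0" using ph \<open>x = take 5 w\<close> by simp
  next
    assume h: "phi (e (idx w)) w mod 6 = 0"
    have "take 5 w \<in> A_perm (e (if nat (w!5) < 120 then nat (w!5) else 0))"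
      using tg h ph unfolding A_perm_def idx_def phi_def by simp
    moreover have "w = take 5 w @ [int (nat (w!5))]" using ws w5 by simp
    moreover have "nat (w!5) < q" using w5 by simp
    ultimately show "w \<in> A_set e q" unfolding A_set_def by blast
  qed
qed

lemma phi_gsub:
  "phi \<pi> (gsub (mG q) g (gsub (mG q) c c')) mod 6 = (phi \<pi> g - phi \<pi> c + phi \<pi> c') mod 6"
proof -
  let ?d = "gsub (mG q) g (gsub (mG q) c c')"
  have "phi \<pi> ?d mod 6 = (\<Sum>i<5. int (\<pi> i + 1) * ?d!i mod 6) mod 6" unfolding phi_def by (simp add: mod_sum_eq)
  also have "\<dots> = (\<Sum>i<5. int (\<pi> i + 1) * (g!i - c!i + c'!i) mod 6) mod 6"
  proof (rule arg_cong[where f="\<lambda>x. x mod 6"], rule sum.cong, rule refl)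
    fix i assume i: "i \<in> {..<5::nat}"
    then have "?d!i = (g!i - (c!i - c'!i) mod 6) mod 6" by (simp add: mG_nth)
    also have "\<dots> = (g!i - (c!i - c'!i)) mod 6" by (rule mod_diff_right_eq)
    also have "\<dots> = (g!i - c!i + c'!i) mod 6" by (simp add: diff_diff_eq2 add.commute add_diff_eq)
    finally have E: "?d!i = (g!i - c!i + c'!i) mod 6" .
    then show "int (\<pi> i + 1) * ?d!i mod 6 = int (\<pi> i + 1) * (g!i - c!i + c'!i) mod 6"
      by (metis mod_mult_right_eq)
  qed
  also have "\<dots> = (\<Sum>i<5. int (\<pi> i + 1) * (g!i - c!i + c'!i)) mod 6" by (simp add: mod_sum_eq)
  also have "(\<Sum>i<5. int (\<pi> i + 1) * (g!i - c!i + c'!i)) = phi \<pi> g - phi \<pi> c + phi \<pi> c'"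
    unfolding phi_def by (simp add: distrib_left right_diff_distrib sum.distrib sum_subtractf)
  finally show ?thesis .
qed

lemma d5: "g \<in> grp (mG q) \<Longrightarrow> j < 6 \<Longrightarrow> j' < 6 \<Longrightarrow> gsub (mG q) g (gsub (mG q) (cC j) (cC j')) ! 5 = g!5"
proof -
  assume g: "g \<in> grp (mG q)" and "j < 6" "j' < 6"
  have "0 \<le> g!5 \<and> g!5 < mG q ! 5" using g by (simp add: grp_def)
  then have "0 \<le> g!5" "g!5 < int q" by (auto simp: mG_nth)
  then show ?thesis by (simp add: mG_nth cC_nth)
qed

lemma cC_inj: "j < 6 \<Longrightarrow> j' < 6 \<Longrightarrow> cC j = cC j' \<Longrightarrow> j = j'"
proof -
  assume j: "j < 6" "j' < 6" "cC j = cC j'"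
  show "j = j'"
  proof (cases "j < 5")
    case True
    then have "cC j ! j = 1" by (simp add: cC_nth)
    then have "cC j' ! j = 1" using j(3) by simp
    moreover have "cC j' ! j = (if j' < 5 \<and> j = j' then 1 else 0)" by (rule cC_nth) (use True in simp)
    ultimately show ?thesis by (simp split: if_splits)
  next
    case False
    show ?thesis
    proof (cases "j' < 5")
      case True
      then have "cC j' ! j' = 1" by (simp add: cC_nth)
      then have "cC j ! j' = 1" using j(3) by simp
      moreover have "cC j ! j' = (if j < 5 \<and> j' = j then 1 else 0)" by (rule cC_nth) (use True in simp)
      ultimately show ?thesis by (simp split: if_splits)
    qed (use j False in auto)
  qed
qed

definition h1 :: "nat \<Rightarrow> int list \<Rightarrow> real" where
  "h1 q w = (\<Sum>j<6. \<Sum>j'<6. if w = gsub (mG q) (cC j) (cC j') then 1 else 0) / 6"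

lemma h1_nonneg: "0 \<le> h1 q w" by (simp add: h1_def sum_nonneg)

lemma h1_zero: assumes q: "q > 0" shows "h1 q (gzero (mG q)) = 1"
proof -
  have "(\<Sum>j<6. \<Sum>j'<6. if gzero (mG q) = gsub (mG q) (cC j) (cC j') then 1 else 0) = (\<Sum>j<6::nat. \<Sum>j'<6::nat. if j = j' then 1 else (0::real))"
  proof (intro sum.cong refl)
    fix j j' assume "j \<in> {..<6::nat}" "j' \<in> {..<6::nat}"
    then show "(if gzero (mG q) = gsub (mG q) (cC j) (cC j') then 1 else 0) = (if j = j' then 1 else (0::real))"
      using gsub_eq_zero[OF mG_pos[OF q] cC_grp[OF q] cC_grp[OF q], of j j'] cC_inj[of j j'] by auto
  qed
  then show ?thesis unfolding h1_def by simp
qed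

lemma h1_conv:
  assumes q: "q > 0" and perm: "\<And>k. k < 120 \<Longrightarrow> e k permutes {..<5}" and g: "g \<in> grp (mG q)"
  shows "(\<Sum>a\<in>A_set e q. h1 q (gsub (mG q) g a)) = 1"
proof -
  let ?A = "A_set e q" and ?m = "mG q"
  let ?d = "\<lambda>j j'. gsub ?m g (gsub ?m (cC j) (cC j'))"
  define \<pi> where "\<pi> = e (idx g)"
  have pp: "\<pi> permutes {..<5}" unfolding \<pi>_def idx_def by (rule perm) auto
  have pm: "pos ?m" using mG_pos[OF q] .
  have fA: "finite ?A" using A_grp finite_grp finite_subset by blast
  have "(\<Sum>a\<in>?A. h1 q (gsub ?m g a)) = (\<Sum>a\<in>?A. \<Sum>j<6. \<Sum>j'<6. if a = ?d j j' then 1 else 0) / 6"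
    unfolding h1_def sum_divide_distrib[symmetric]
  proof (intro arg_cong[where f="\<lambda>x. x / 6"] sum.cong refl)
    fix a j j' assume a: "a \<in> ?A" and "j \<in> {..<6::nat}" "j' \<in> {..<6::nat}"
    have "gsub ?m g a = gsub ?m (cC j) (cC j') \<longleftrightarrow> a = ?d j j'"
    proof (rule gsub_eq_iff[OF pm g])
      show "a \<in> grp ?m" using a A_grp by blast
      show "gsub ?m (cC j) (cC j') \<in> grp ?m" by (rule gsub_grp[OF pm])
    qed
    then show "(if gsub ?m g a = gsub ?m (cC j) (cC j') then 1 else 0) = (if a = ?d j j' then 1 else (0::real))"
      by simp
  qed
  also have "(\<Sum>a\<in>?A. \<Sum>j<6. \<Sum>j'<6. if a = ?d j j' then 1 else 0) = (\<Sum>j<6::nat. \<Sum>a\<in>?A. \<Sum>j'<6::nat. if a = ?d j j' then 1 else (0::real))"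
    by (rule sum.swap)
  also have "\<dots> = (\<Sum>j<6::nat. \<Sum>j'<6::nat. \<Sum>a\<in>?A. if a = ?d j j' then 1 else (0::real))"
    by (intro sum.cong refl) (rule sum.swap)
  also have "\<dots> = (\<Sum>j'<6::nat. \<Sum>j<6::nat. \<Sum>a\<in>?A. if a = ?d j j' then 1 else (0::real))"
    by (rule sum.swap)
  also have "\<dots> = (\<Sum>j'<6::nat. \<Sum>j<6::nat. if (phi \<pi> g + val \<pi> j' - val \<pi> j) mod 6 = 0 then 1 else (0::real))"
  proof (intro sum.cong refl)
    fix j j' assume j: "j \<in> {..<6::nat}" and j': "j' \<in> {..<6::nat}"
    have dg: "?d j j' \<in> grp ?m" by (rule gsub_grp[OF pm])
    have "(\<Sum>a\<in>?A. if a = ?d j j' then 1 else (0::real)) = (if ?d j j' \<in> ?A then 1 else 0)"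
      using fA by (simp add: sum.delta')
    also have "?d j j' \<in> ?A \<longleftrightarrow> phi \<pi> (?d j j') mod 6 = 0"
      using A_mem[OF dg] d5[OF g] j j' unfolding \<pi>_def idx_def by simp
    also have "phi \<pi> (?d j j') mod 6 = (phi \<pi> g + val \<pi> j' - val \<pi> j) mod 6"
      using phi_gsub[of \<pi> q g "cC j" "cC j'"] phi_cC[of j \<pi>] phi_cC[of j' \<pi>] j j' by (simp add: diff_add_eq add_diff_eq)
    finally show "(\<Sum>a\<in>?A. if a = ?d j j' then 1 else (0::real)) = (if (phi \<pi> g + val \<pi> j' - val \<pi> j) mod 6 = 0 then 1 else 0)" .
  qed
  also have "\<dots> = (\<Sum>j'<6::nat. 1)" by (intro sum.cong refl) (rule count_one[OF pp])
  finally show ?thesis by simp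
qed


lemma chr_gzero: "chr ms \<xi> (gzero ms) = 1"
proof -
  have "(\<Sum>i<length ms. real_of_int (\<xi>!i * gzero ms!i) / real_of_int (ms!i)) = 0"
    by (intro sum.neutral) (simp add: gzero_def)
  then show ?thesis by (simp add: chr_def)
qed

lemma gadd_inj: assumes pm: "pos ms" shows "inj_on (gadd ms u) (grp ms)"
proof (rule inj_onI)
  fix b b' assume b: "b \<in> grp ms" and b': "b' \<in> grp ms" and eq: "gadd ms u b = gadd ms u b'"
  show "b = b'"
  proof (rule nth_equalityI)
    show "length b = length b'" using b b' by (simp add: grp_def)
    fix i assume "i < length b"
    then have i: "i < length ms" using b by (simp add: grp_def)
    have r: "0 \<le> b!i" "b!i < ms!i" "0 \<le> b'!i" "b'!i < ms!i" using b b' i by (auto simp: grp_def)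
    have "(u!i + b!i) mod ms!i = (u!i + b'!i) mod ms!i" using eq i by (metis nth_gadd)
    then have "ms!i dvd (u!i + b!i) - (u!i + b'!i)" by (simp add: mod_eq_dvd_iff)
    then have "ms!i dvd b!i - b'!i" by simp
    then have "b!i mod ms!i = b'!i mod ms!i" by (simp add: mod_eq_dvd_iff)
    then show "b!i = b'!i" using r by simp
  qed
qed

definition mH :: "nat \<Rightarrow> int list" where "mH p = replicate 4 (int p)"
lemma mH_pos: "p > 0 \<Longrightarrow> pos (mH p)" by (simp add: pos_def mH_def)

definition h2 :: "nat \<Rightarrow> int list set \<Rightarrow> int list \<Rightarrow> real" where
  "h2 p S y = (cmod (\<Sum>s\<in>S. chr (mH p) s y))^2 / (real (card S))^2"

lemma h2_nonneg: "0 \<le> h2 p S y" by (simp add: h2_def)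

lemma h2_zero: "finite S \<Longrightarrow> card S > 0 \<Longrightarrow> h2 p S (gzero (mH p)) = 1"
  by (auto simp: h2_def chr_gzero card_gt_0_iff)

lemma h2_conv:
  assumes p: "p > 0" and B: "B \<subseteq> grp (mH p)" and S: "finite S" "card S = card B" "card B > 0"
    and orth: "\<forall>s\<in>S. \<forall>s'\<in>S. s \<noteq> s' \<longrightarrow> fourier (mH p) (\<lambda>x. if x \<in> B then 1 else 0) (gsub (mH p) s s') = 0"
  shows "(\<Sum>b\<in>B. h2 p S (gsub (mH p) y (gadd (mH p) u b))) = 1"
proof -
  have pm: "pos (mH p)" using mH_pos[OF p] .
  define \<alpha> where "\<alpha> s = chr (mH p) s y * cnj (chr (mH p) s u)" for s
  have al: "cmod (\<alpha> s) = 1" for s by (simp add: \<alpha>_def norm_mult)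
  have c: "chr (mH p) s (gsub (mH p) y (gadd (mH p) u b)) = \<alpha> s * cnj (chr (mH p) s b)" for s b
    by (simp add: chr_gsub[OF pm] chr_gadd[OF pm] \<alpha>_def)
  have "(\<Sum>b\<in>B. h2 p S (gsub (mH p) y (gadd (mH p) u b))) = (\<Sum>b\<in>B. (cmod (\<Sum>s\<in>S. \<alpha> s * cnj (chr (mH p) s b)))^2) / (real (card S))^2"
    unfolding h2_def c by (simp add: sum_divide_distrib)
  also have "\<dots> = real (card S * card B) / (real (card S))^2"
    using spec_sum[OF pm B S(1) orth al] by simp
  also have "\<dots> = 1" using S by (simp add: power2_eq_square)
  finally show ?thesis .
qed

lemma F2_nnr:
  assumes p: "p > 0" and S: "S \<subseteq> grp (mH p)" and xi: "\<xi> \<in> grp (mH p)"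
  shows "nnr (\<Sum>y\<in>grp (mH p). complex_of_real (h2 p S y) * chr (mH p) \<xi> y)"
proof -
  have pm: "pos (mH p)" using mH_pos[OF p] .
  let ?m = "mH p" and ?c = "(real (card S))^2"
  have "(\<Sum>y\<in>grp ?m. complex_of_real (h2 p S y) * chr ?m \<xi> y)
      = (\<Sum>y\<in>grp ?m. complex_of_real (1 / ?c) * (\<Sum>s\<in>S. \<Sum>s'\<in>S. chr ?m (gadd ?m \<xi> (gsub ?m s s')) y))"
  proof (intro sum.cong refl)
    fix y
    have "complex_of_real (h2 p S y) = complex_of_real (1/?c) * ((\<Sum>s\<in>S. chr ?m s y) * cnj (\<Sum>s\<in>S. chr ?m s y))"
      unfolding h2_def complex_norm_square[symmetric] by (simp add: divide_inverse mult.commute)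
    also have "(\<Sum>s\<in>S. chr ?m s y) * cnj (\<Sum>s\<in>S. chr ?m s y) = (\<Sum>s\<in>S. \<Sum>s'\<in>S. chr ?m s y * cnj (chr ?m s' y))"
      by (simp add: cnj_sum sum_product)
    finally show "complex_of_real (h2 p S y) * chr ?m \<xi> y = complex_of_real (1 / ?c) * (\<Sum>s\<in>S. \<Sum>s'\<in>S. chr ?m (gadd ?m \<xi> (gsub ?m s s')) y)"
      by (simp add: chr_gadd_left[OF pm] chr_gsub_left[OF pm] sum_distrib_left sum_distrib_right algebra_simps)
  qed
  also have "\<dots> = complex_of_real (1 / ?c) * (\<Sum>y\<in>grp ?m. \<Sum>s\<in>S. \<Sum>s'\<in>S. chr ?m (gadd ?m \<xi> (gsub ?m s s')) y)"
    by (rule sum_distrib_left[symmetric])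
  also have "(\<Sum>y\<in>grp ?m. \<Sum>s\<in>S. \<Sum>s'\<in>S. chr ?m (gadd ?m \<xi> (gsub ?m s s')) y) = (\<Sum>s\<in>S. \<Sum>y\<in>grp ?m. \<Sum>s'\<in>S. chr ?m (gadd ?m \<xi> (gsub ?m s s')) y)"
    by (subst sum.swap) (rule refl)
  also have "\<dots> = (\<Sum>s\<in>S. \<Sum>s'\<in>S. \<Sum>y\<in>grp ?m. chr ?m (gadd ?m \<xi> (gsub ?m s s')) y)"
    by (rule sum.cong[OF refl]) (subst sum.swap, rule refl)
  finally show ?thesis
    by (simp only:) (intro nnr_mult nnr_of_real nnr_sum ortho_nnr[OF pm], simp_all)
qed

lemma of_real_if_mult: "complex_of_real (if P then 1 else 0) * z = (if P then z else 0)" by simp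

lemma F1_nnr:
  assumes q: "q > 0"
  shows "nnr (\<Sum>w\<in>grp (mG q). complex_of_real (h1 q w) * chr (mG q) \<xi> w)"
proof -
  let ?m = "mG q"
  have pm: "pos ?m" using mG_pos[OF q] .
  have "(\<Sum>w\<in>grp ?m. complex_of_real (h1 q w) * chr ?m \<xi> w)
     = (\<Sum>w\<in>grp ?m. \<Sum>j<6. \<Sum>j'<6. complex_of_real (1/6) * (if w = gsub ?m (cC j) (cC j') then chr ?m \<xi> w else 0))"
    unfolding h1_def by (intro sum.cong refl) (simp add: sum_distrib_right sum_divide_distrib of_real_if_mult)
  also have "\<dots> = (\<Sum>j<6. \<Sum>j'<6. \<Sum>w\<in>grp ?m. complex_of_real (1/6) * (if w = gsub ?m (cC j) (cC j') then chr ?m \<xi> w else 0))"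
    by (subst sum.swap) (intro sum.cong refl, rule sum.swap)
  also have "\<dots> = (\<Sum>j<6. \<Sum>j'<6. complex_of_real (1/6) * (chr ?m \<xi> (cC j) * cnj (chr ?m \<xi> (cC j'))))"
  proof (intro sum.cong refl)
    fix j j' :: nat
    have "gsub ?m (cC j) (cC j') \<in> grp ?m" by (rule gsub_grp[OF pm])
    then have "(\<Sum>w\<in>grp ?m. if w = gsub ?m (cC j) (cC j') then chr ?m \<xi> w else 0) = chr ?m \<xi> (gsub ?m (cC j) (cC j'))"
      by (simp add: sum.delta finite_grp)
    also have "\<dots> = chr ?m \<xi> (cC j) * cnj (chr ?m \<xi> (cC j'))" by (rule chr_gsub[OF pm])
    finally have E: "(\<Sum>w\<in>grp ?m. if w = gsub ?m (cC j) (cC j') then chr ?m \<xi> w else 0) = chr ?m \<xi> (cC j) * cnj (chr ?m \<xi> (cC j'))" .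
    show "(\<Sum>w\<in>grp ?m. complex_of_real (1/6) * (if w = gsub ?m (cC j) (cC j') then chr ?m \<xi> w else 0))
       = complex_of_real (1/6) * (chr ?m \<xi> (cC j) * cnj (chr ?m \<xi> (cC j')))"
      unfolding sum_distrib_left[symmetric] E ..
  qed
  also have "\<dots> = complex_of_real (1/6) * (\<Sum>j<6. \<Sum>j'<6. chr ?m \<xi> (cC j) * cnj (chr ?m \<xi> (cC j')))"
    by (simp only: sum_distrib_left)
  also have "(\<Sum>j<6. \<Sum>j'<6. chr ?m \<xi> (cC j) * cnj (chr ?m \<xi> (cC j'))) = (\<Sum>j<6. chr ?m \<xi> (cC j)) * cnj (\<Sum>j<6. chr ?m \<xi> (cC j))"
    by (simp only: cnj_sum sum_product)
  finally show ?thesis by (simp only:) (intro nnr_mult nnr_of_real nnr_cnj, simp)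
qed


lemma Pmem:
  assumes "length g' = length m1" "A \<subseteq> grp m1"
  shows "g' @ y' \<in> P_set Hm A t B \<longleftrightarrow> g' \<in> A \<and> y' \<in> gadd Hm (t g') ` B"
proof
  assume "g' @ y' \<in> P_set Hm A t B"
  then obtain a b where ab: "g' @ y' = a @ gadd Hm (t a) b" "a \<in> A" "b \<in> B" unfolding P_set_def by blast
  have "length a = length m1" using ab(2) assms(2) grp_length by blast
  then have "g' = a \<and> y' = gadd Hm (t a) b" using ab(1) assms(1) by (simp add: append_eq_append_conv)
  then show "g' \<in> A \<and> y' \<in> gadd Hm (t g') ` B" using ab by blast
next
  assume "g' \<in> A \<and> y' \<in> gadd Hm (t g') ` B"
  then show "g' @ y' \<in> P_set Hm A t B" unfolding P_set_def by blast
qed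

theorem lemma3p3:
  fixes p q :: nat and e :: "nat \<Rightarrow> nat \<Rightarrow> nat"
    and B :: "int list set" and t :: "int list \<Rightarrow> int list"
  assumes "prime p" "p > 3" "prime q" "q > 6 * p ^ 4"
    and "bij_betw e {..<120} {\<pi>. \<pi> permutes {..<5}}"
    and "B \<subseteq> grp (replicate 4 (int p))"
    and "spectral (replicate 4 (int p)) B"
    and "card B = 2 * p"
    and "\<forall>a\<in>A_set e q. t a \<in> grp (replicate 4 (int p))"
  shows "pd_tiles (replicate 5 6 @ [int q] @ replicate 4 (int p))
           (P_set (replicate 4 (int p)) (A_set e q) t B)"
proof -
  have p0: "p > 0" and q0: "q > 0" using assms(2) assms(3) prime_gt_0_nat by auto
  have perm: "e k permutes {..<5}" if "k < 120" for k
    using bij_betw_apply[OF assms(5)] that by auto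
  have eqH: "replicate 4 (int p) = mH p" by (simp add: mH_def)
  have eqM: "replicate 5 6 @ [int q] @ mH p = mG q @ mH p" by (simp add: mG_def)
  have B: "B \<subseteq> grp (mH p)" using assms(6) eqH by simp
  obtain S where S: "S \<subseteq> grp (mH p)" "card S = card B"
    and orth: "\<forall>s\<in>S. \<forall>s'\<in>S. s \<noteq> s' \<longrightarrow> fourier (mH p) (\<lambda>x. if x \<in> B then 1 else 0) (gsub (mH p) s s') = 0"
    using assms(7) unfolding spectral_def eqH by blast
  have fS: "finite S" using S(1) finite_grp finite_subset by blast
  have cB: "card B > 0" using assms(8) p0 by simp
  have pG: "pos (mG q)" using mG_pos[OF q0] .
  have pH: "pos (mH p)" using mH_pos[OF p0] .
  let ?A = "A_set e q"
  let ?P = "P_set (mH p) ?A t B"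
  let ?M = "mG q @ mH p"
  define h where "h x = h1 q (take 6 x) * h2 p S (drop 6 x)" for x
  have hgy: "h (g @ y) = h1 q g * h2 p S y" if "length g = 6" for g y
    using that by (simp add: h_def)
  have AG: "?A \<subseteq> grp (mG q)" by (rule A_grp)
  have fA: "finite ?A" using AG finite_grp finite_subset by blast
  have fnn: "nnr (fourier ?M (\<lambda>x. complex_of_real (h x)) \<xi>)" if "\<xi> \<in> grp ?M" for \<xi>
  proof -
    from that have "\<xi> \<in> (\<lambda>(g,y). g @ y) ` (grp (mG q) \<times> grp (mH p))" unfolding grp_append .
    then obtain gy where gy: "gy \<in> grp (mG q) \<times> grp (mH p)" "\<xi> = (\<lambda>(g,y). g @ y) gy" by (rule imageE)
    obtain \<xi>1 \<xi>2 where "gy = (\<xi>1, \<xi>2)" by (cases gy)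
    then have xi: "\<xi> = \<xi>1 @ \<xi>2" and x1: "\<xi>1 \<in> grp (mG q)" and x2: "\<xi>2 \<in> grp (mH p)" using gy by auto
    have l1: "length \<xi>1 = length (mG q)" using x1 grp_length by blast
    have "fourier ?M (\<lambda>x. complex_of_real (h x)) \<xi>
       = (\<Sum>g\<in>grp (mG q). \<Sum>y\<in>grp (mH p). complex_of_real (h (g @ y)) * chr ?M (\<xi>1 @ \<xi>2) (g @ y))"
      unfolding fourier_def xi by (rule sum_grp_append)
    also have "\<dots> = (\<Sum>g\<in>grp (mG q). \<Sum>y\<in>grp (mH p). (complex_of_real (h1 q g) * chr (mG q) \<xi>1 g) * (complex_of_real (h2 p S y) * chr (mH p) \<xi>2 y))"
    proof (rule sum.cong[OF refl], rule sum.cong[OF refl])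
      fix g y assume g: "g \<in> grp (mG q)" and "y \<in> grp (mH p)"
      have lg: "length g = length (mG q)" using g grp_length by blast
      show "complex_of_real (h (g @ y)) * chr ?M (\<xi>1 @ \<xi>2) (g @ y) = (complex_of_real (h1 q g) * chr (mG q) \<xi>1 g) * (complex_of_real (h2 p S y) * chr (mH p) \<xi>2 y)"
        using lg l1 by (simp add: hgy chr_append)
    qed
    also have "\<dots> = (\<Sum>g\<in>grp (mG q). complex_of_real (h1 q g) * chr (mG q) \<xi>1 g) * (\<Sum>y\<in>grp (mH p). complex_of_real (h2 p S y) * chr (mH p) \<xi>2 y)"
      by (rule sum_product[symmetric])
    finally have E: "fourier ?M (\<lambda>x. complex_of_real (h x)) \<xi> = (\<Sum>g\<in>grp (mG q). complex_of_real (h1 q g) * chr (mG q) \<xi>1 g) * (\<Sum>y\<in>grp (mH p). complex_of_real (h2 p S y) * chr (mH p) \<xi>2 y)" .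
    show ?thesis unfolding E by (rule nnr_mult[OF F1_nnr[OF q0] F2_nnr[OF p0 S(1) x2]])
  qed

  show ?thesis unfolding eqH eqM pd_tiles_def
  proof (intro exI[of _ h] conjI ballI)
    fix x show "0 \<le> h x" unfolding h_def by (intro mult_nonneg_nonneg h1_nonneg h2_nonneg)
  next
    have lz: "length (gzero (mG q)) = 6" by (simp add: gzero_def)
    have "h (gzero ?M) = h1 q (gzero (mG q)) * h2 p S (gzero (mH p))"
      unfolding gzero_append by (rule hgy[OF lz])
    also have "\<dots> = 1"
    proof -
      have "card S > 0" using S(2) cB by simp
      then show ?thesis using h1_zero[OF q0] h2_zero[OF fS] by simp
    qed
    finally show "h (gzero ?M) = 1" .
  next
    fix x assume "x \<in> grp ?M"
    then have "x \<in> (\<lambda>(g,y). g @ y) ` (grp (mG q) \<times> grp (mH p))" unfolding grp_append .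
    then obtain gy where gy: "gy \<in> grp (mG q) \<times> grp (mH p)" "x = (\<lambda>(g,y). g @ y) gy" by (rule imageE)
    obtain g y where "gy = (g, y)" by (cases gy)
    then have x: "x = g @ y" and g: "g \<in> grp (mG q)" and y: "y \<in> grp (mH p)" using gy by auto
    have lg: "length g = 6" using g grp_length by fastforce
    have innerS: "(\<Sum>y'\<in>grp (mH p). if y' \<in> gadd (mH p) (t g') ` B then h2 p S (gsub (mH p) y y') else 0) = 1" for g'
    proof -
      have sub: "gadd (mH p) (t g') ` B \<subseteq> grp (mH p)" using gadd_grp[OF pH] by blast
      have inj: "inj_on (gadd (mH p) (t g')) B" using gadd_inj[OF pH] B inj_on_subset by blast
      have "(\<Sum>y'\<in>grp (mH p). if y' \<in> gadd (mH p) (t g') ` B then h2 p S (gsub (mH p) y y') else 0)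
          = (\<Sum>y'\<in>grp (mH p) \<inter> gadd (mH p) (t g') ` B. h2 p S (gsub (mH p) y y'))"
        by (simp add: sum.inter_restrict finite_grp)
      also have "grp (mH p) \<inter> gadd (mH p) (t g') ` B = gadd (mH p) (t g') ` B" using sub by blast
      also have "(\<Sum>y'\<in>gadd (mH p) (t g') ` B. h2 p S (gsub (mH p) y y')) = (\<Sum>b\<in>B. h2 p S (gsub (mH p) y (gadd (mH p) (t g') b)))"
        by (simp add: sum.reindex[OF inj])
      also have "\<dots> = 1" by (rule h2_conv[OF p0 B fS S(2) cB orth])
      finally show ?thesis .
    qed
    have "(\<Sum>z\<in>grp ?M. (if z \<in> ?P then 1 else 0) * h (gsub ?M x z))
        = (\<Sum>g'\<in>grp (mG q). \<Sum>y'\<in>grp (mH p). (if g' @ y' \<in> ?P then 1 else 0) * h (gsub ?M (g @ y) (g' @ y')))"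
      unfolding x by (rule sum_grp_append)
    also have "\<dots> = (\<Sum>g'\<in>grp (mG q). if g' \<in> ?A then h1 q (gsub (mG q) g g') *
          (\<Sum>y'\<in>grp (mH p). if y' \<in> gadd (mH p) (t g') ` B then h2 p S (gsub (mH p) y y') else 0) else 0)"
    proof (rule sum.cong[OF refl])
      fix g' assume g': "g' \<in> grp (mG q)"
      have lg': "length g' = length (mG q)" using g' grp_length by blast
      have "(if g' @ y' \<in> ?P then 1 else 0) * h (gsub ?M (g @ y) (g' @ y'))
          = (if g' \<in> ?A then h1 q (gsub (mG q) g g') * (if y' \<in> gadd (mH p) (t g') ` B then h2 p S (gsub (mH p) y y') else 0) else 0)" for y'
        using Pmem[OF lg' AG, of y' "mH p" t B] gsub_append[of g "mG q" g' "mH p" y y'] lg lg'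
        by (simp add: hgy)
      then show "(\<Sum>y'\<in>grp (mH p). (if g' @ y' \<in> ?P then 1 else 0) * h (gsub ?M (g @ y) (g' @ y')))
          = (if g' \<in> ?A then h1 q (gsub (mG q) g g') *
          (\<Sum>y'\<in>grp (mH p). if y' \<in> gadd (mH p) (t g') ` B then h2 p S (gsub (mH p) y y') else 0) else 0)"
        by (simp add: sum_distrib_left)
    qed
    also have "\<dots> = (\<Sum>g'\<in>grp (mG q). if g' \<in> ?A then h1 q (gsub (mG q) g g') else 0)"
      by (rule sum.cong[OF refl]) (simp only: innerS mult_1_right)
    also have "\<dots> = (\<Sum>g'\<in>grp (mG q) \<inter> ?A. h1 q (gsub (mG q) g g'))"
      by (simp add: sum.inter_restrict finite_grp)
    also have "grp (mG q) \<inter> ?A = ?A" using AG by blast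
    also have "(\<Sum>g'\<in>?A. h1 q (gsub (mG q) g g')) = 1" by (rule h1_conv[OF q0 perm g])
    finally show "(\<Sum>z\<in>grp ?M. (if z \<in> ?P then 1 else 0) * h (gsub ?M x z)) = 1" .
  next
    fix \<xi> assume "\<xi> \<in> grp ?M"
    then show "Im (fourier ?M (\<lambda>x. complex_of_real (h x)) \<xi>) = 0" using fnn by (simp add: nnr_def)
  next
    fix \<xi> assume "\<xi> \<in> grp ?M"
    then show "0 \<le> Re (fourier ?M (\<lambda>x. complex_of_real (h x)) \<xi>)" using fnn by (simp add: nnr_def)
  qed
qed

end
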